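(* Let $J$ be a Jordan algebra with unit element $1$ over a field $F$ of characteristic $\neq 2,3$, and let $d$ be a derivation with invertible values of $J$. If $I$ is an ideal of $J$ with $I \subseteq \ker(d)$, then $I^2 = 0$.
   Context: A Jordan algebra is a commutative algebra satisfying $(x^2,y,x)=0$, where $(a,b,c)=(ab)c-a(bc)$. In a Jordan algebra $J$ with unit $1$, an element $x$ is invertible if there exists $y \in J$ with $xy = 1$ and $x^2 y = x$. A derivation with invertible values of $J$ is a nonzero derivation $d$ of $J$ such that for every $x \in J$, $d(x)$ is either invertible or equal to $0$. *)

theory Defs
  imports Complex_Main
begin

definition bilinear_mult :: "('a::field \<Rightarrow> 'v::ab_group_add \<Rightarrow> 'v) \<Rightarrow> ('v \<Rightarrow> 'v \<Rightarrow> 'v) \<Rightarrow> bool" where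
  "bilinear_mult scale mul \<longleftrightarrow>
     (\<forall>x y z. mul (x + y) z = mul x z + mul y z) \<and>
     (\<forall>x y z. mul x (y + z) = mul x y + mul x z) \<and>
     (\<forall>c x y. mul (scale c x) y = scale c (mul x y)) \<and>
     (\<forall>c x y. mul x (scale c y) = scale c (mul x y))"

definition assoc :: "('v \<Rightarrow> 'v \<Rightarrow> 'v) \<Rightarrow> 'v \<Rightarrow> 'v \<Rightarrow> 'v \<Rightarrow> 'v::ab_group_add" where
  "assoc mul a b c = mul (mul a b) c - mul a (mul b c)"

definition jordan_algebra :: "('a::field \<Rightarrow> 'v::ab_group_add \<Rightarrow> 'v) \<Rightarrow> ('v \<Rightarrow> 'v \<Rightarrow> 'v) \<Rightarrow> bool" where
  "jordan_algebra scale mul \<longleftrightarrow>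
     Vector_Spaces.vector_space scale \<and> bilinear_mult scale mul \<and>
     (\<forall>x y. mul x y = mul y x) \<and>
     (\<forall>x y. assoc mul (mul x x) y x = 0)"

definition is_unit_elem :: "('v \<Rightarrow> 'v \<Rightarrow> 'v) \<Rightarrow> 'v \<Rightarrow> bool" where
  "is_unit_elem mul e \<longleftrightarrow> (\<forall>x. mul e x = x \<and> mul x e = x)"

definition jinvertible :: "('v \<Rightarrow> 'v \<Rightarrow> 'v) \<Rightarrow> 'v \<Rightarrow> 'v \<Rightarrow> bool" where
  "jinvertible mul e x \<longleftrightarrow> (\<exists>y. mul x y = e \<and> mul (mul x x) y = x)"

definition is_derivation :: "('a::field \<Rightarrow> 'v::ab_group_add \<Rightarrow> 'v) \<Rightarrow> ('v \<Rightarrow> 'v \<Rightarrow> 'v) \<Rightarrow> ('v \<Rightarrow> 'v) \<Rightarrow> bool" where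
  "is_derivation scale mul d \<longleftrightarrow>
     Vector_Spaces.linear scale scale d \<and> (\<forall>x y. d (mul x y) = mul (d x) y + mul x (d y))"

definition derivation_invertible_values ::
  "('a::field \<Rightarrow> 'v::ab_group_add \<Rightarrow> 'v) \<Rightarrow> ('v \<Rightarrow> 'v \<Rightarrow> 'v) \<Rightarrow> 'v \<Rightarrow> ('v \<Rightarrow> 'v) \<Rightarrow> bool" where
  "derivation_invertible_values scale mul e d \<longleftrightarrow>
     is_derivation scale mul d \<and> d \<noteq> (\<lambda>x. 0) \<and>
     (\<forall>x. d x = 0 \<or> jinvertible mul e (d x))"

definition is_ideal :: "('a::field \<Rightarrow> 'v::ab_group_add \<Rightarrow> 'v) \<Rightarrow> ('v \<Rightarrow> 'v \<Rightarrow> 'v) \<Rightarrow> 'v set \<Rightarrow> bool" where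
  "is_ideal scale mul I \<longleftrightarrow> module.subspace scale I \<and>
     (\<forall>x a. a \<in> I \<longrightarrow> mul x a \<in> I \<and> mul a x \<in> I)"

definition ideal_sq :: "('a::field \<Rightarrow> 'v::ab_group_add \<Rightarrow> 'v) \<Rightarrow> ('v \<Rightarrow> 'v \<Rightarrow> 'v) \<Rightarrow> 'v set \<Rightarrow> 'v set" where
  "ideal_sq scale mul I = module.span scale {mul a b | a b. a \<in> I \<and> b \<in> I}"

end

theory Submission
  imports Defs
begin

lemma half_zero:
  fixes scale :: "'a::field \<Rightarrow> 'v::ab_group_add \<Rightarrow> 'v" and v :: 'v
  assumes vs: "Vector_Spaces.vector_space scale" and two: "(2::'a) \<noteq> 0"
    and h: "v + v = 0"
  shows "v = 0"
proof -
  interpret vector_space scale by (rule vs)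
  have "scale (1/2) (v + v) = scale (1/2) v + scale (1/2) v"
    by (rule scale_right_distrib)
  also have "\<dots> = scale (1/2 + 1/2) v"
    by (rule scale_left_distrib[symmetric])
  also have "(1/2 + 1/2 :: 'a) = 1" using two by (simp add: field_simps)
  finally have "scale (1/2) (v + v) = v" by simp
  with h show ?thesis by simp
qed

locale jmul =
  fixes mul :: "'v::ab_group_add \<Rightarrow> 'v \<Rightarrow> 'v"
  assumes addl: "mul (x + y) z = mul x z + mul y z"
    and addr: "mul x (y + z) = mul x y + mul x z"
    and comm: "mul x y = mul y x"
begin
lemma zl[simp]: "mul 0 z = 0"
  using addl[of 0 0 z] by simp
lemma zr[simp]: "mul z 0 = 0"
  using addr[of z 0 0] by simp
lemma nl: "mul (- x) z = - mul x z"
proof -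
  have "mul x z + mul (-x) z = 0" using addl[of x "-x" z] by simp
  thus ?thesis by (metis minus_unique)
qed
lemma nr: "mul z (- x) = - mul z x"
proof -
  have "mul z x + mul z (-x) = 0" using addr[of z x "-x"] by simp
  thus ?thesis by (metis minus_unique)
qed
lemma dl: "mul (x - y) z = mul x z - mul y z"
  using addl[of x "-y" z] nl by simp
lemma dr: "mul z (x - y) = mul z x - mul z y"
  using addr[of z x "-y"] nr by simp

definition f where "f y x = mul (mul (mul x x) y) x - mul (mul x x) (mul y x)"
definition P where "P y x z = mul (mul (mul x x) y) z - mul (mul x x) (mul y z)
   + (mul (mul (mul x z) y) x - mul (mul x z) (mul y x))
   + (mul (mul (mul x z) y) x - mul (mul x z) (mul y x))"

lemma f_add: "f y (x + z) = f y x + f y z + P y x z + P y z x"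
  unfolding f_def P_def
  by (simp add: addl addr algebra_simps comm[of z x] comm[of "mul z z" x]
      comm[of "mul x x" z])

lemma f_neg: "f y (- z) = - f y z"
  unfolding f_def by (simp add: nl nr)
lemma P_negz: "P y x (- z) = - P y x z"
  unfolding P_def by (simp add: nl nr algebra_simps)
lemma P_negx: "P y (- z) x = P y z x"
  unfolding P_def by (simp add: nl nr algebra_simps)

definition Q where "Q y x w z = mul (mul (mul x w) y) z + mul (mul (mul x z) y) w
   + mul (mul (mul w z) y) x - mul (mul x w) (mul y z) - mul (mul x z) (mul y w)
   - mul (mul w z) (mul y x)"

lemma P_add: "P y (x + w) z = P y x z + P y w z + (Q y x w z + Q y x w z)"
  unfolding P_def Q_def
  by (simp add: addl addr algebra_simps comm[of w x] comm[of z x] comm[of z w])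
end

theorem lemma3:
  fixes scale :: "'a::field \<Rightarrow> 'v::ab_group_add \<Rightarrow> 'v"
    and mul :: "'v \<Rightarrow> 'v \<Rightarrow> 'v"
    and e :: 'v and d :: "'v \<Rightarrow> 'v" and I :: "'v set"
  assumes "jordan_algebra scale mul"
    and "is_unit_elem mul e"
    and "(2::'a) \<noteq> 0" and "(3::'a) \<noteq> 0"
    and "derivation_invertible_values scale mul e d"
    and "is_ideal scale mul I"
    and "I \<subseteq> {x. d x = 0}"
  shows "ideal_sq scale mul I = {0}"
proof -
  from assms(1) have vs: "Vector_Spaces.vector_space scale"
    and bl: "bilinear_mult scale mul" and cm: "\<forall>x y. mul x y = mul y x"
    and jor: "\<forall>x y. assoc mul (mul x x) y x = 0"
    unfolding jordan_algebra_def by auto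
  interpret jmul mul
    using bl cm by unfold_locales (auto simp: bilinear_mult_def)
  have f0: "f y x = 0" for y x using jor unfolding f_def assoc_def by simp
  have P0: "P y x z = 0" for y x z
  proof -
    have a: "P y x z + P y z x = 0" using f_add[of y x z] by (simp add: f0)
    have b: "- P y x z + P y z x = 0" using f_add[of y x "-z"]
      by (simp add: f0 P_negz P_negx)
    have "P y x z + P y x z = 0" using a b
      by (metis add_diff_cancel_right' add_uminus_conv_diff diff_minus_eq_add diff_self
          minus_add_cancel)
    thus ?thesis using half_zero[OF vs assms(3)] by blast
  qed
  have Q0: "Q y x w z = 0" for y x w z
  proof -
    have "Q y x w z + Q y x w z = 0" using P_add[of y x w z] by (simp add: P0)
    thus ?thesis using half_zero[OF vs assms(3)] by blast
  qed
  from assms(5) have der: "\<forall>x y. d (mul x y) = mul (d x) y + mul x (d y)"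
    and nz: "d \<noteq> (\<lambda>x. 0)" and inv: "\<forall>x. d x = 0 \<or> jinvertible mul e (d x)"
    unfolding derivation_invertible_values_def is_derivation_def by auto
  from nz obtain t where "d t \<noteq> 0" by auto
  with inv obtain v where uv: "mul (d t) v = e"
    unfolding jinvertible_def by blast
  from assms(6) have idl: "\<And>x a. a \<in> I \<Longrightarrow> mul x a \<in> I \<and> mul a x \<in> I"
    unfolding is_ideal_def by auto
  have ann: "mul a (d t) = 0" if "a \<in> I" for a
  proof -
    have "d (mul a t) = 0" using idl[OF that] assms(7) by auto
    moreover have "d a = 0" using that assms(7) by auto
    ultimately show ?thesis using der by simp
  qed
  have prod0: "mul a b = 0" if "a \<in> I" "b \<in> I" for a b
  proof -
    have "mul a b \<in> I" using idl that by blast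
    hence "mul (mul a b) v \<in> I" using idl by blast
    hence 1: "mul (mul (mul a b) v) (d t) = 0" by (rule ann)
    have "Q v a b (d t) = 0" by (rule Q0)
    moreover have "mul (mul a b) (mul v (d t)) = mul a b"
      using uv assms(2) comm[of v "d t"] unfolding is_unit_elem_def by simp
    ultimately show ?thesis using 1 ann[OF that(1)] ann[OF that(2)]
      unfolding Q_def by (simp add: comm[of "d t"])
  qed
  have "{mul a b | a b. a \<in> I \<and> b \<in> I} \<subseteq> {0}" using prod0 by auto
  hence S: "{mul a b | a b. a \<in> I \<and> b \<in> I} = {} \<or> {mul a b | a b. a \<in> I \<and> b \<in> I} = {0}"
    by (rule subset_singletonD)
  interpret vector_space scale by (rule vs)
  show ?thesis unfolding ideal_sq_def using S
  proof
    assume h: "{mul a b | a b. a \<in> I \<and> b \<in> I} = {}"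
    show "span {mul a b | a b. a \<in> I \<and> b \<in> I} = {0}" unfolding h by (rule span_empty)
  next
    assume h: "{mul a b | a b. a \<in> I \<and> b \<in> I} = {0}"
    have "span {0} = {0}" using span_insert_0[of "{}"] span_empty by simp
    thus "span {mul a b | a b. a \<in> I \<and> b \<in> I} = {0}" unfolding h .
  qed
qed

end
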